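(* Let $p_0,p_1,p_2,T>0$, let $\Lambda\subset[0,\infty)$ have finite measure, $q_k=p_k^{-1/2}$ ($k=0,1,2$), and $$p=p_0\chi_{(-\infty,-T/2]}+p_1\chi_{(-T/2,T/2]}+p_2\chi_{(T/2,\infty)}.$$ Set $$C=\tfrac1{16q_0^2}\Big[\big(1+\tfrac{q_0}{q_1}\big)^2\big(1+\tfrac{q_1}{q_2}\big)^2+\big(1-\tfrac{q_0}{q_1}\big)^2\big(1-\tfrac{q_1}{q_2}\big)^2\Big],\quad K=\tfrac1{8q_0^2}\big(1-\tfrac{q_0^2}{q_1^2}\big)\big(1-\tfrac{q_1^2}{q_2^2}\big),\quad \zeta=2q_1T.$$ Then for all $u>0$, $\kappa(u):=\frac{|a_0^+(u^2)|^2}{q_0^2}=C+K\cos(\zeta u)$, and hence $$J(s):=\frac1{2\pi}\int_{\Lambda^{1/2}}\frac{e^{isu}}{\kappa(u)}\,du=\frac1{2\pi}\int_{\Lambda^{1/2}}\frac{e^{isu}}{C+K\cos\zeta u}\,du,\quad s\in\mathbb{R}.$$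
   Context: $\Lambda^{1/2}=\{u\ge0:u^2\in\Lambda\}$. Here $n=2$, $t_1=-T/2$, $t_2=T/2$. For $z\in\mathbb{C}\setminus(-\infty,0]$ with principal square root $\sqrt z$ and $k=1,2$ let $$L_k(z)=\frac12\begin{bmatrix}\left(1+\frac{q_k}{q_{k-1}}\right)e^{it_k(q_{k-1}-q_k)\sqrt z} & \left(1-\frac{q_k}{q_{k-1}}\right)e^{-it_k(q_{k-1}+q_k)\sqrt z}\\ \left(1-\frac{q_k}{q_{k-1}}\right)e^{it_k(q_{k-1}+q_k)\sqrt z} & \left(1+\frac{q_k}{q_{k-1}}\right)e^{-it_k(q_{k-1}-q_k)\sqrt z}\end{bmatrix},$$ $R_k=L_k^{-1}$, and define $(a_2^+,b_2^+)=(1,0)$, $(a_l^+,b_l^+)^T=R_{l+1}(z)(a_{l+1}^+,b_{l+1}^+)^T$ for $l=1,0$. *)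

theory Defs
  imports "HOL-Analysis.Analysis"
begin

text \<open>Transfer matrix L_k(z), with q_{k-1} = qp, q_k = qk, t_k = t; entries indexed by 1,2.
  The square root is the principal one (csqrt).\<close>
definition Lmat :: "real \<Rightarrow> real \<Rightarrow> real \<Rightarrow> complex \<Rightarrow> complex^2^2" where
  "Lmat qp qk t z = (let s = csqrt z; r = complex_of_real (qk / qp) in
     (\<chi> i j. if i = 1 then
                (if j = 1 then (1 + r) / 2 * exp (\<i> * t * (qp - qk) * s)
                          else (1 - r) / 2 * exp (- \<i> * t * (qp + qk) * s))
              else
                (if j = 1 then (1 - r) / 2 * exp (\<i> * t * (qp + qk) * s)
                          else (1 + r) / 2 * exp (- \<i> * t * (qp - qk) * s))))"

definition Rmat :: "real \<Rightarrow> real \<Rightarrow> real \<Rightarrow> complex \<Rightarrow> complex^2^2" where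
  "Rmat qp qk t z = matrix_inv (Lmat qp qk t z)"

definition ab_plus :: "real \<Rightarrow> real \<Rightarrow> real \<Rightarrow> real \<Rightarrow> nat \<Rightarrow> complex \<Rightarrow> complex^2" where
  "ab_plus q0 q1 q2 T l z =
     (let v2 = (\<chi> i. if i = 1 then 1 else 0) :: complex^2;
          v1 = Rmat q1 q2 (T/2) z *v v2;
          v0 = Rmat q0 q1 (-T/2) z *v v1
      in if l = 2 then v2 else if l = 1 then v1 else v0)"

definition a_plus :: "real \<Rightarrow> real \<Rightarrow> real \<Rightarrow> real \<Rightarrow> nat \<Rightarrow> complex \<Rightarrow> complex" where
  "a_plus q0 q1 q2 T l z = ab_plus q0 q1 q2 T l z $ 1"

definition sqrt_set :: "real set \<Rightarrow> real set" where
  "sqrt_set \<Lambda> = {u. u \<ge> 0 \<and> u\<^sup>2 \<in> \<Lambda>}"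

end

theory Submission
  imports Defs
begin

definition m2 :: "complex \<Rightarrow> complex \<Rightarrow> complex \<Rightarrow> complex \<Rightarrow> complex^2^2" where
 "m2 a b c d = (\<chi> i j. if i = 1 then (if j = 1 then a else b) else (if j = 1 then c else d))"

lemma m2_mult: "m2 a b c d ** m2 a' b' c' d' = m2 (a*a'+b*c') (a*b'+b*d') (c*a'+d*c') (c*b'+d*d')"
  unfolding m2_def matrix_matrix_mult_def by (simp add: vec_eq_iff forall_2 sum_2)

lemma m2_one: "mat 1 = m2 1 0 0 1"
  unfolding m2_def mat_def by (simp add: vec_eq_iff forall_2)

lemma m2_eq: "m2 a b c d = m2 a' b' c' d' \<longleftrightarrow> a=a' \<and> b=b' \<and> c=c' \<and> d=d'"
  unfolding m2_def by (auto simp add: vec_eq_iff forall_2)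

lemma matrix_inv_eq: fixes A B :: "'a::comm_ring_1^'n^'n"
  assumes "A ** B = mat 1" "B ** A = mat 1" shows "matrix_inv A = B"
proof -
  have ex: "\<exists>A'. A ** A' = mat 1 \<and> A' ** A = mat 1" using assms by blast
  define A' where "A' = matrix_inv A"
  have h: "A ** A' = mat 1 \<and> A' ** A = mat 1" unfolding A'_def matrix_inv_def by (rule someI_ex[OF ex])
  have "A' = A' ** (A ** B)" using assms by simp
  also have "\<dots> = (A' ** A) ** B" by (simp add: matrix_mul_assoc)
  also have "\<dots> = B" using h by simp
  finally show ?thesis unfolding A'_def .
qed

lemma m2_inv: assumes "a*d - b*c \<noteq> 0"
  shows "matrix_inv (m2 a b c d) = m2 (d/(a*d-b*c)) (-b/(a*d-b*c)) (-c/(a*d-b*c)) (a/(a*d-b*c))"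
proof -
  define D where "D = a*d-b*c"
  have D: "D \<noteq> 0" using assms D_def by simp
  have 1: "a*(d/D) + b*(-c/D) = 1" "c*(-b/D) + d*(a/D) = 1" "(d/D)*a + (-b/D)*c = 1" "(-c/D)*b + (a/D)*d = 1"
    using D by (simp_all add: field_simps, simp_all add: D_def algebra_simps)
  have 0: "a*(-b/D) + b*(a/D) = 0" "c*(d/D) + d*(-c/D) = 0" "(d/D)*b + (-b/D)*d = 0" "(-c/D)*a + (a/D)*c = 0"
    using D by (simp_all add: field_simps)
  show ?thesis unfolding D_def[symmetric]
    by (rule matrix_inv_eq) (simp_all only: m2_mult m2_one m2_eq 1 0 simp_thms)
qed

lemma m2_vec: "m2 a b c d *v (\<chi> i. if i = 1 then x else y) = (\<chi> i. if i = 1 then a*x+b*y else c*x+d*y)"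
  unfolding m2_def matrix_vector_mult_def by (simp add: vec_eq_iff forall_2 sum_2)

lemma Lmat_m2: "Lmat qp qk t z = (let s = csqrt z; r = complex_of_real (qk / qp) in
   m2 ((1 + r) / 2 * exp (\<i> * t * (qp - qk) * s)) ((1 - r) / 2 * exp (- \<i> * t * (qp + qk) * s))
      ((1 - r) / 2 * exp (\<i> * t * (qp + qk) * s)) ((1 + r) / 2 * exp (- \<i> * t * (qp - qk) * s)))"
  unfolding Lmat_def m2_def Let_def by simp

lemma Rmat_m2: assumes "qp \<noteq> 0" "qk \<noteq> 0"
  shows "Rmat qp qk t z = (let s = csqrt z; r = complex_of_real (qk / qp);
     e1 = exp (\<i> * t * (qp - qk) * s); e2 = exp (\<i> * t * (qp + qk) * s) in
   m2 ((1 + r) / (2*r) / e1) (-(1 - r) / (2*r) / e2)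
      (-(1 - r) / (2*r) * e2) ((1 + r) / (2*r) * e1))"
proof -
  define s where "s = csqrt z"
  define r where "r = complex_of_real (qk / qp)"
  define e1 where "e1 = exp (\<i> * t * (qp - qk) * s)"
  define e2 where "e2 = exp (\<i> * t * (qp + qk) * s)"
  have r0: "r \<noteq> 0" using assms unfolding r_def by simp
  have ee1: "exp (- \<i> * t * (qp - qk) * s) = 1 / e1"
  proof -
    have "exp (- \<i> * t * (qp - qk) * s) = exp (- (\<i> * t * (qp - qk) * s))" by simp
    then show ?thesis unfolding e1_def by (simp add: exp_minus inverse_eq_divide)
  qed
  have ee2: "exp (- \<i> * t * (qp + qk) * s) = 1 / e2"
  proof -
    have "exp (- \<i> * t * (qp + qk) * s) = exp (- (\<i> * t * (qp + qk) * s))" by simp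
    then show ?thesis unfolding e2_def by (simp add: exp_minus inverse_eq_divide)
  qed
  have e10: "e1 \<noteq> 0" "e2 \<noteq> 0" unfolding e1_def e2_def by auto
  have det: "(1 + r) / 2 * e1 * ((1 + r) / 2 * (1/e1)) - (1 - r) / 2 * (1/e2) * ((1 - r) / 2 * e2) = r"
    using e10 by (simp add: field_simps)
  show ?thesis unfolding Rmat_def Lmat_m2 Let_def s_def[symmetric] r_def[symmetric]
      e1_def[symmetric] e2_def[symmetric] ee1 ee2
    apply (subst m2_inv) 
    using det r0 e10 by (simp_all add: det m2_eq field_simps)
qed
lemma cexp_real: "exp (\<i> * complex_of_real t * complex_of_real a * complex_of_real u) = cis (t*a*u)"
  by (simp add: cis_conv_exp mult.assoc)

lemma a0_formula:
  fixes q0 q1 q2 T u :: real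
  assumes q: "q0 > 0" "q1 > 0" "q2 > 0" and u: "u \<ge> 0"
  shows "a_plus q0 q1 q2 T 0 (complex_of_real (u\<^sup>2)) =
     complex_of_real ((1+q1/q0)*(1+q2/q1)/(4*(q1/q0)*(q2/q1))) * cis (-((-T/2)*(q0-q1)*u + (T/2)*(q1-q2)*u))
   + complex_of_real ((1-q1/q0)*(1-q2/q1)/(4*(q1/q0)*(q2/q1))) * cis ((T/2)*(q1+q2)*u + (T/2)*(q0+q1)*u)"
proof -
  have cs: "csqrt (complex_of_real (u\<^sup>2)) = complex_of_real u" using u by (simp add: csqrt_of_real)
  define r1 where "r1 = complex_of_real (q1/q0)"
  define r2 where "r2 = complex_of_real (q2/q1)"
  define E1 where "E1 = cis ((T/2)*(q1-q2)*u)"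
  define E2 where "E2 = cis ((T/2)*(q1+q2)*u)"
  define F1 where "F1 = cis ((-T/2)*(q0-q1)*u)"
  define F2 where "F2 = cis ((-T/2)*(q0+q1)*u)"
  have R2: "Rmat q1 q2 (T/2) (complex_of_real (u\<^sup>2)) =
     m2 ((1 + r2) / (2*r2) / E1) (-(1 - r2) / (2*r2) / E2) (-(1 - r2) / (2*r2) * E2) ((1 + r2) / (2*r2) * E1)"
    unfolding r2_def E1_def E2_def
    by (rule Rmat_m2[of q1 q2 "T/2" "complex_of_real (u\<^sup>2)", unfolded Let_def cs cexp_real]) (use q in auto)
  have R1: "Rmat q0 q1 (-T/2) (complex_of_real (u\<^sup>2)) =
     m2 ((1 + r1) / (2*r1) / F1) (-(1 - r1) / (2*r1) / F2) (-(1 - r1) / (2*r1) * F2) ((1 + r1) / (2*r1) * F1)"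
    unfolding r1_def F1_def F2_def
    by (rule Rmat_m2[of q0 q1 "-T/2" "complex_of_real (u\<^sup>2)", unfolded Let_def cs cexp_real]) (use q in auto)
  have a0: "a_plus q0 q1 q2 T 0 (complex_of_real (u\<^sup>2)) =
     (1 + r1) / (2*r1) / F1 * ((1 + r2) / (2*r2) / E1) + (-(1 - r1) / (2*r1) / F2) * (-(1 - r2) / (2*r2) * E2)"
    unfolding a_plus_def ab_plus_def Let_def R1 R2 m2_vec by simp
  have c1: "cis (-((-T/2)*(q0-q1)*u + (T/2)*(q1-q2)*u)) = 1 / (F1 * E1)"
    unfolding F1_def E1_def by (simp add: cis_mult cis_divide[symmetric] )
  have c2: "cis ((T/2)*(q1+q2)*u + (T/2)*(q0+q1)*u) = E2 / F2"
    unfolding F2_def E2_def by (simp add: cis_divide)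
  have nz: "r1 \<noteq> 0" "r2 \<noteq> 0" "E1 \<noteq> 0" "F1 \<noteq> 0" "E2 \<noteq> 0" "F2 \<noteq> 0"
    using q by (auto simp: r1_def r2_def E1_def F1_def E2_def F2_def)
  have A: "complex_of_real ((1+q1/q0)*(1+q2/q1)/(4*(q1/q0)*(q2/q1))) = (1+r1)*(1+r2)/(4*r1*r2)"
    by (simp add: r1_def r2_def)
  have B: "complex_of_real ((1-q1/q0)*(1-q2/q1)/(4*(q1/q0)*(q2/q1))) = (1-r1)*(1-r2)/(4*r1*r2)"
    by (simp add: r1_def r2_def)
  show ?thesis unfolding a0 c1 c2 A B using nz
    by (simp add: field_simps)
qed
lemma cmod_two: "(cmod (complex_of_real A * cis a + complex_of_real B * cis b))\<^sup>2 = A\<^sup>2 + B\<^sup>2 + 2*A*B*cos (b - a)"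
proof -
  have "(cmod (complex_of_real A * cis a + complex_of_real B * cis b))\<^sup>2 = (A * cos a + B * cos b)\<^sup>2 + (A * sin a + B * sin b)\<^sup>2"
    by (simp add: cmod_power2)
  moreover have "(sin a)\<^sup>2 + (cos a)\<^sup>2 = 1" "(sin b)\<^sup>2 + (cos b)\<^sup>2 = 1" by simp_all
  ultimately show ?thesis unfolding cos_diff by algebra
qed

lemma kappa_formula:
  fixes q0 q1 q2 T u :: real
  assumes q: "q0 > 0" "q1 > 0" "q2 > 0" and u: "u \<ge> 0"
  shows "(cmod (a_plus q0 q1 q2 T 0 (complex_of_real (u\<^sup>2))))\<^sup>2 / q0\<^sup>2 =
     1 / (16 * q0\<^sup>2) * ((1 + q0/q1)\<^sup>2 * (1 + q1/q2)\<^sup>2 + (1 - q0/q1)\<^sup>2 * (1 - q1/q2)\<^sup>2)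
     + 1 / (8 * q0\<^sup>2) * (1 - q0\<^sup>2/q1\<^sup>2) * (1 - q1\<^sup>2/q2\<^sup>2) * cos (2 * q1 * T * u)"
proof -
  have ang: "((T/2)*(q1+q2)*u + (T/2)*(q0+q1)*u) - (-((-T/2)*(q0-q1)*u + (T/2)*(q1-q2)*u)) = 2 * q1 * T * u"
    by (simp add: field_simps)
  show ?thesis unfolding a0_formula[OF q u] cmod_two ang
    using q by (simp add: field_simps power2_eq_square)
qed
theorem lemma4p1:
  fixes p0 p1 p2 T :: real and \<Lambda> :: "real set"
    and q0 q1 q2 C K \<zeta> :: real and \<kappa> :: "real \<Rightarrow> real"
  assumes "p0 > 0" "p1 > 0" "p2 > 0" "T > 0"
    and "\<Lambda> \<subseteq> {0..}" "\<Lambda> \<in> sets lebesgue" "emeasure lebesgue \<Lambda> < \<infinity>"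
  defines "q0 \<equiv> p0 powr (-1/2)" and "q1 \<equiv> p1 powr (-1/2)" and "q2 \<equiv> p2 powr (-1/2)"
  defines "C \<equiv> 1 / (16 * q0\<^sup>2) * ((1 + q0/q1)\<^sup>2 * (1 + q1/q2)\<^sup>2 + (1 - q0/q1)\<^sup>2 * (1 - q1/q2)\<^sup>2)"
    and "K \<equiv> 1 / (8 * q0\<^sup>2) * (1 - q0\<^sup>2/q1\<^sup>2) * (1 - q1\<^sup>2/q2\<^sup>2)"
    and "\<zeta> \<equiv> 2 * q1 * T"
    and "\<kappa> \<equiv> (\<lambda>u. (cmod (a_plus q0 q1 q2 T 0 (complex_of_real (u\<^sup>2))))\<^sup>2 / q0\<^sup>2)"
  shows "(\<forall>u > 0. \<kappa> u = C + K * cos (\<zeta> * u)) \<and>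
    (\<forall>s::real.
      1 / (2 * pi) * (LINT u : sqrt_set \<Lambda> | lebesgue. exp (\<i> * s * u) / complex_of_real (\<kappa> u)) =
      1 / (2 * pi) * (LINT u : sqrt_set \<Lambda> | lebesgue. exp (\<i> * s * u) / complex_of_real (C + K * cos (\<zeta> * u))))"
proof -
  have q: "q0 > 0" "q1 > 0" "q2 > 0" using assms(1-3) unfolding q0_def q1_def q2_def by simp_all
  have k: "\<kappa> u = C + K * cos (\<zeta> * u)" if "u \<ge> 0" for u
    unfolding \<kappa>_def C_def K_def \<zeta>_def using kappa_formula[OF q that] by (simp add: mult.assoc)
  have "(\<lambda>u. indicator (sqrt_set \<Lambda>) u *\<^sub>R (exp (\<i> * s * u) / complex_of_real (\<kappa> u))) =
        (\<lambda>u. indicator (sqrt_set \<Lambda>) u *\<^sub>R (exp (\<i> * s * u) / complex_of_real (C + K * cos (\<zeta> * u))))" for s :: real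
    by (rule ext) (auto simp: indicator_def sqrt_set_def k)
  then show ?thesis using k by (simp add: set_lebesgue_integral_def)
qed

end
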